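(* In every execution of the protocol Fever, the following two properties hold. (1) If a correct processor is in view $v$ at time $\mathtt t$ and in view $v'$ at a time $\mathtt t'\ge\mathtt t$, then $v'\ge v$. (2) If $v$ is initial and $0<j<k$, then no QC for view $v+j$ is formed before a QC for view $v+j-1$ has been formed.
   Context: Model. There is a set $\Pi=\{p_0,\dots,p_{n-1}\}$ of $n$ processors, and $t$ is the largest integer $<n/3$. At most $t$ processors are Byzantine (arbitrary behaviour); the others are correct. Authenticated channels, unforgeable signatures and threshold signatures are assumed. Each processor $p$ has a local clock $c(p)$. All clocks advance at the same rate as real time, except when the protocol forwards them. $\Gamma>0$ is a known constant. Underlying protocol. Views $v\in\mathbb N_{\ge0}$; a fixed integer $k\ge3$; $\mathtt{lead}(v)=p_i$ with $i=\lfloor v/k\rfloor\bmod n$; $v$ is initial iff $v\bmod k=0$. A quorum certificate (QC) for view $v$ is a threshold signature of $n-t$ distinct processors, and a correct processor contributes to a QC for view $v$ only while in view $v$. Protocol Fever. Set $\mathtt c_v=\Gamma v$. Each correct processor $p$ keeps a current view (initially $0$) and behaves as follows. (a) When $c(p)=\mathtt c_v$ for an initial view $v$, $p$ enters view $v$ and sends a $\mathtt{view}\ v$ message to $\mathtt{lead}(v)$. (b) Upon first seeing a QC for a view $v'$ at least its current view, $p$ enters view $v'+1$, and if $c(p)<\mathtt c_{v'+1}$ it sets $c(p):=\mathtt c_{v'+1}$. (c) Upon first seeing a view certificate (VC) for an initial view $v'$ greater than its current view, $p$ enters view $v'$, and if $c(p)<\mathtt c_{v'}$ it sets $c(p):=\mathtt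 c_{v'}$. (d) If $p=\mathtt{lead}(v')$ for some $v'$ at least its current view, then upon first receiving $\mathtt{view}\ v'$ messages from $t+1$ distinct processors, $p$ forms a VC (threshold signature) for $v'$ and sends it to all processors. A non-initial view is entered by a correct processor only via rule (b). *)

theory Defs
  imports Main "HOL.Real"
begin

text \<open>Processors are the naturals p < n; B is the set of Byzantine processors.
  The global state of an execution of Fever.\<close>

record fstate =
  time  :: real
  view  :: "nat \<Rightarrow> nat"
  clk   :: "nat \<Rightarrow> real"
  aDone :: "nat \<Rightarrow> nat set"    \<comment> \<open>initial views for which rule (a) has fired at p\<close>
  votes :: "nat \<Rightarrow> nat set"    \<comment> \<open>processors that contributed to a QC for view v\<close>
  qcs   :: "nat set"
  vmsgs :: "nat \<Rightarrow> nat set"    \<comment> \<open>processors that sent a (signed) view v message\<close>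
  vcs   :: "nat set"

definition fever_t :: "nat \<Rightarrow> nat" where
  "fever_t n = (n - 1) div 3"   \<comment> \<open>largest integer < n/3 (for n >= 1)\<close>

definition lead :: "nat \<Rightarrow> nat \<Rightarrow> nat \<Rightarrow> nat" where
  "lead n k v = (v div k) mod n"

definition is_initial :: "nat \<Rightarrow> nat \<Rightarrow> bool" where
  "is_initial k v \<longleftrightarrow> v mod k = 0"

definition cv :: "real \<Rightarrow> nat \<Rightarrow> real" where
  "cv \<Gamma> v = \<Gamma> * real v"

inductive fever_step :: "nat \<Rightarrow> nat \<Rightarrow> real \<Rightarrow> nat set \<Rightarrow> fstate \<Rightarrow> fstate \<Rightarrow> bool"
  for n k \<Gamma> B where
  rule_a: "\<lbrakk>p < n; p \<notin> B; is_initial k v; clk s p = cv \<Gamma> v; v \<notin> aDone s p\<rbrakk> \<Longrightarrow>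
     fever_step n k \<Gamma> B s (s\<lparr>view := (view s)(p := v),
                             aDone := (aDone s)(p := insert v (aDone s p)),
                             vmsgs := (vmsgs s)(v := insert p (vmsgs s v))\<rparr>)"
| rule_b: "\<lbrakk>p < n; p \<notin> B; v' \<in> qcs s; view s p \<le> v'\<rbrakk> \<Longrightarrow>
     fever_step n k \<Gamma> B s (s\<lparr>view := (view s)(p := Suc v'),
                             clk := (clk s)(p := max (clk s p) (cv \<Gamma> (Suc v')))\<rparr>)"
| rule_c: "\<lbrakk>p < n; p \<notin> B; is_initial k v'; v' \<in> vcs s; view s p < v'\<rbrakk> \<Longrightarrow>
     fever_step n k \<Gamma> B s (s\<lparr>view := (view s)(p := v'),
                             clk := (clk s)(p := max (clk s p) (cv \<Gamma> v'))\<rparr>)"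
  \<comment> \<open>a correct processor contributes to a QC only for its current view\<close>
| vote_correct: "\<lbrakk>p < n; p \<notin> B\<rbrakk> \<Longrightarrow>
     fever_step n k \<Gamma> B s (s\<lparr>votes := (votes s)(view s p := insert p (votes s (view s p)))\<rparr>)"
  \<comment> \<open>Byzantine processors may sign anything\<close>
| vote_byz: "\<lbrakk>q < n; q \<in> B\<rbrakk> \<Longrightarrow>
     fever_step n k \<Gamma> B s (s\<lparr>votes := (votes s)(v := insert q (votes s v))\<rparr>)"
| viewmsg_byz: "\<lbrakk>q < n; q \<in> B\<rbrakk> \<Longrightarrow>
     fever_step n k \<Gamma> B s (s\<lparr>vmsgs := (vmsgs s)(v := insert q (vmsgs s v))\<rparr>)"
  \<comment> \<open>a QC (threshold signature of n - t distinct processors) is formed\<close>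
| form_qc: "n - fever_t n \<le> card (votes s v) \<Longrightarrow>
     fever_step n k \<Gamma> B s (s\<lparr>qcs := insert v (qcs s)\<rparr>)"
  \<comment> \<open>(d) a VC (threshold signature of t+1 view messages) is formed by the leader\<close>
| form_vc: "\<lbrakk>fever_t n + 1 \<le> card (vmsgs s v);
             lead n k v \<in> B \<or> view s (lead n k v) \<le> v\<rbrakk> \<Longrightarrow>
     fever_step n k \<Gamma> B s (s\<lparr>vcs := insert v (vcs s)\<rparr>)"
  \<comment> \<open>passage of real time; clocks advance at the rate of real time; rule (a)
     must fire exactly when a clock reaches c_v for an initial v\<close>
| tick: "\<lbrakk>d > 0;
          \<forall>p<n. p \<notin> B \<longrightarrow> (\<forall>v. is_initial k v \<longrightarrow>
              \<not> (clk s p < cv \<Gamma> v \<and> cv \<Gamma> v < clk s p + d) \<and>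
              (clk s p = cv \<Gamma> v \<longrightarrow> v \<in> aDone s p))\<rbrakk> \<Longrightarrow>
     fever_step n k \<Gamma> B s (s\<lparr>time := time s + d, clk := (\<lambda>p. clk s p + d)\<rparr>)"

definition fever_init :: "fstate \<Rightarrow> bool" where
  "fever_init s \<longleftrightarrow> time s = 0 \<and> (\<forall>p. view s p = 0) \<and> (\<forall>p. aDone s p = {}) \<and>
     (\<forall>v. votes s v = {}) \<and> qcs s = {} \<and> (\<forall>v. vmsgs s v = {}) \<and> vcs s = {}"

text \<open>An execution: a sequence of global states starting in an initial state
  (arbitrary initial clock values), each step a protocol step or a stutter
  (to include finite executions).\<close>
definition fever_execution :: "nat \<Rightarrow> nat \<Rightarrow> real \<Rightarrow> nat set \<Rightarrow> (nat \<Rightarrow> fstate) \<Rightarrow> bool" where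
  "fever_execution n k \<Gamma> B ex \<longleftrightarrow> fever_init (ex 0) \<and>
     (\<forall>i. fever_step n k \<Gamma> B (ex i) (ex (Suc i)) \<or> ex (Suc i) = ex i)"

end

theory Submission
  imports Defs
begin

definition Inv :: "nat \<Rightarrow> nat \<Rightarrow> real \<Rightarrow> nat set \<Rightarrow> fstate \<Rightarrow> bool" where
  "Inv n k \<Gamma> B s \<longleftrightarrow>
     (\<forall>p<n. p \<notin> B \<longrightarrow> view s p = 0 \<or> cv \<Gamma> (view s p) \<le> clk s p) \<and>
     (\<forall>p<n. p \<notin> B \<longrightarrow> \<not> is_initial k (view s p) \<longrightarrow> view s p - 1 \<in> qcs s) \<and>
     (\<forall>w. votes s w \<subseteq> {..<n}) \<and>
     (\<forall>w p. \<not> is_initial k w \<longrightarrow> p \<in> votes s w \<longrightarrow> p \<notin> B \<longrightarrow> w - 1 \<in> qcs s) \<and>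
     (\<forall>w \<in> qcs s. \<not> is_initial k w \<longrightarrow> w - 1 \<in> qcs s)"

lemma init_Inv: "fever_init s \<Longrightarrow> is_initial k 0 \<Longrightarrow> Inv n k \<Gamma> B s"
  by (simp add: fever_init_def Inv_def)

lemma card_arg:
  assumes "n \<ge> 1" "B \<subseteq> {..<n}" "card B \<le> fever_t n"
    and "V \<subseteq> {..<n}" "n - fever_t n \<le> card V"
  shows "\<exists>p \<in> V. p \<notin> B"
proof (rule ccontr)
  assume "\<not> ?thesis"
  then have "V \<subseteq> B" by blast
  moreover have "finite B" using assms(2) finite_subset by blast
  ultimately have "card V \<le> card B" by (simp add: card_mono)
  with assms show False unfolding fever_t_def by linarith
qed

lemma step_Inv:
  assumes st: "fever_step n k \<Gamma> B s s'" and I: "Inv n k \<Gamma> B s"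
    and n1: "n \<ge> 1" and BB: "B \<subseteq> {..<n}" and cB: "card B \<le> fever_t n"
  shows "Inv n k \<Gamma> B s'"
  using st
proof cases
  case (rule_a p v)
  then show ?thesis using I by (auto simp: Inv_def)
next
  case (rule_b p v')
  then show ?thesis using I by (auto simp: Inv_def)
next
  case (rule_c p v')
  then show ?thesis using I by (auto simp: Inv_def)
next
  case (vote_correct p)
  then show ?thesis using I by (auto simp: Inv_def)
next
  case (vote_byz q v)
  then show ?thesis using I by (auto simp: Inv_def)
next
  case (viewmsg_byz q v)
  then show ?thesis using I by (auto simp: Inv_def)
next
  case (form_qc v)
  have "\<not> is_initial k v \<Longrightarrow> v - 1 \<in> qcs s"
  proof -
    assume ni: "\<not> is_initial k v"
    have "votes s v \<subseteq> {..<n}" using I by (simp add: Inv_def)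
    then obtain p where "p \<in> votes s v" "p \<notin> B"
      using card_arg[OF n1 BB cB _ form_qc(2)] by blast
    then show ?thesis using I ni by (auto simp: Inv_def)
  qed
  then show ?thesis using I form_qc by (auto simp: Inv_def)
next
  case (form_vc v)
  then show ?thesis using I by (auto simp: Inv_def)
next
  case (tick d)
  then show ?thesis using I by (auto simp: Inv_def)
qed

lemma step_mono:
  assumes st: "fever_step n k \<Gamma> B s s'" and I: "Inv n k \<Gamma> B s" and G: "\<Gamma> > 0"
    and p: "p < n" "p \<notin> B"
  shows "view s p \<le> view s' p"
  using st
proof cases
  case (rule_a q v)
  show ?thesis
  proof (cases "q = p")
    case True
    with rule_a I p have "view s p = 0 \<or> cv \<Gamma> (view s p) \<le> cv \<Gamma> v"
      by (auto simp: Inv_def)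
    then have "view s p \<le> v" using G by (auto simp: cv_def)
    then show ?thesis using rule_a True by simp
  qed (use rule_a in simp)
qed auto

lemma exec_Inv:
  assumes E: "fever_execution n k \<Gamma> B ex" and k: "k \<ge> 3"
    and n1: "n \<ge> 1" and BB: "B \<subseteq> {..<n}" and cB: "card B \<le> fever_t n"
  shows "Inv n k \<Gamma> B (ex i)"
proof (induction i)
  case 0
  show ?case using E by (intro init_Inv) (auto simp: fever_execution_def is_initial_def)
next
  case (Suc i)
  from E have "fever_step n k \<Gamma> B (ex i) (ex (Suc i)) \<or> ex (Suc i) = ex i"
    by (simp add: fever_execution_def)
  then show ?case using step_Inv[OF _ Suc n1 BB cB] Suc by auto
qed

theorem mainTheorem4:
  fixes n k :: nat and \<Gamma> :: real and B :: "nat set" and ex :: "nat \<Rightarrow> fstate"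
  assumes "n \<ge> 1" and "k \<ge> 3" and "\<Gamma> > 0"
    and "B \<subseteq> {..<n}" and "card B \<le> fever_t n"
    and "fever_execution n k \<Gamma> B ex"
  shows "(\<forall>p i j. p < n \<and> p \<notin> B \<and> i \<le> j \<longrightarrow> view (ex i) p \<le> view (ex j) p) \<and>
         (\<forall>v j i. is_initial k v \<and> 0 < j \<and> j < k \<and> v + j \<in> qcs (ex i) \<longrightarrow>
                  v + j - 1 \<in> qcs (ex i))"
proof
  have I: "\<And>i. Inv n k \<Gamma> B (ex i)" using exec_Inv assms by blast
  have S: "\<And>p i. p < n \<Longrightarrow> p \<notin> B \<Longrightarrow> view (ex i) p \<le> view (ex (Suc i)) p"
  proof -
    fix p :: nat and i :: nat assume p: "p < n" "p \<notin> B"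
    from assms(6) have "fever_step n k \<Gamma> B (ex i) (ex (Suc i)) \<or> ex (Suc i) = ex i"
      by (simp add: fever_execution_def)
    then show "view (ex i) p \<le> view (ex (Suc i)) p"
      using step_mono[OF _ I assms(3) p] by auto
  qed
  show "\<forall>p i j. p < n \<and> p \<notin> B \<and> i \<le> j \<longrightarrow> view (ex i) p \<le> view (ex j) p"
  proof (intro allI impI)
    fix p i j :: nat assume h: "p < n \<and> p \<notin> B \<and> i \<le> j"
    then have "i \<le> j" by simp
    then show "view (ex i) p \<le> view (ex j) p"
    proof (induction j rule: dec_induct)
      case base then show ?case by simp
    next
      case (step m) then show ?case using S[of p m] h by linarith
    qed
  qed
  show "\<forall>v j i. is_initial k v \<and> 0 < j \<and> j < k \<and> v + j \<in> qcs (ex i) \<longrightarrow>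
                  v + j - 1 \<in> qcs (ex i)"
  proof (intro allI impI)
    fix v j i :: nat assume h: "is_initial k v \<and> 0 < j \<and> j < k \<and> v + j \<in> qcs (ex i)"
    then have "(v + j) mod k = j" by (simp add: is_initial_def mod_add_left_eq[symmetric])
    then have "\<not> is_initial k (v + j)" using h by (simp add: is_initial_def)
    then show "v + j - 1 \<in> qcs (ex i)" using I[of i] h by (auto simp: Inv_def)
  qed
qed

end
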